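(* Let $p>2$ be a prime. For integers $a,b$ define the Kloosterman sum $K(a,b)=\sum_{x=1}^{p-1} e_p\left(ax+b\overline{x}\right)$, where $\overline{x}$ denotes the inverse of $x$ modulo $p$ and $e_p(\alpha)=\exp\left(\frac{2\pi i\alpha}{p}\right)$. Then for any integers $a,b$ with $p\nmid ab$ we have \[ K(a,b)^2 = p + \sum_{l=1}^{p} \left(\frac{l^2-4l}{p}\right) K(a,lb), \] where $\left(\frac{\cdot}{p}\right)$ is the Legendre symbol.
   Context: $\left(\frac{\cdot}{p}\right)$ denotes the Legendre symbol modulo $p$ (with value $0$ at multiples of $p$). *)

theory Defs
  imports "HOL-Analysis.Analysis" "HOL-Number_Theory.Number_Theory"
begin

definition e_p :: "int \<Rightarrow> int \<Rightarrow> complex" where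
  "e_p p \<alpha> = exp (2 * pi * \<i> * of_int \<alpha> / of_int p)"

definition kloosterman :: "int \<Rightarrow> int \<Rightarrow> int \<Rightarrow> complex" where
  "kloosterman p a b = (\<Sum>x = 1..p - 1. e_p p (a * x + b * modular_inverse p x))"

end

theory Submission
  imports Defs
begin


lemma ep_add: "p \<noteq> 0 \<Longrightarrow> e_p p (x + y) = e_p p x * e_p p y"
  unfolding e_p_def by (simp add: add_divide_distrib distrib_left exp_add)

lemma ep_0: "e_p p 0 = 1" by (simp add: e_p_def)

lemma ep_period: assumes "p > 0" shows "e_p p (x + p * k) = e_p p x"
proof -
  have "e_p p (x + p*k) = e_p p x * e_p p (p*k)" using assms ep_add by simp
  moreover have "e_p p (p*k) = 1"
  proof -
    have "2 * pi * \<i> * of_int (p*k) / of_int p = \<i> * (of_int k * (of_real pi * 2))"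
      using assms by (simp add: field_simps)
    thus ?thesis unfolding e_p_def by simp
  qed
  ultimately show ?thesis by simp
qed

lemma ep_cong: assumes "p > 0" "[x = y] (mod p)" shows "e_p p x = e_p p y"
proof -
  obtain k where "y = x + p * k" using assms(2) cong_iff_lin by blast
  thus ?thesis using ep_period[OF assms(1)] by simp
qed

lemma ep_pow: "p \<noteq> 0 \<Longrightarrow> e_p p (c * int n) = (e_p p c) ^ n"
  by (induction n) (simp_all add: ep_0 distrib_left ep_add)

lemma ep_ne1: assumes "p > 0" "\<not> p dvd c" shows "e_p p c \<noteq> 1"
proof
  assume "e_p p c = 1"
  then obtain n :: int where n: "Im (2 * pi * \<i> * of_int c / of_int p) = of_int (2*n) * pi"
    unfolding e_p_def exp_eq_1 by blast
  have "Im (2 * pi * \<i> * of_int c / of_int p) = 2 * pi * c / p" by simp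
  with n have "2 * pi * c / p = 2 * n * pi" by simp
  hence "real_of_int c = real_of_int (n * p)" using assms(1) by (simp add: field_simps)
  hence "c = n * p" by (simp only: of_int_eq_iff)
  thus False using assms by simp
qed

lemma ep_sum_full: assumes "p > 0" "\<not> p dvd c" shows "(\<Sum>x\<in>{0..<p}. e_p p (c * x)) = 0"
proof -
  have "{0..<p} = int ` {0..<nat p}" using assms(1) by (simp add: image_int_atLeastLessThan)
  hence "(\<Sum>x\<in>{0..<p}. e_p p (c * x)) = (\<Sum>i<nat p. e_p p (c * int i))"
    by (simp add: sum.reindex lessThan_atLeast0)
  also have "\<dots> = (\<Sum>i<nat p. (e_p p c) ^ i)" using assms ep_pow by simp
  also have "\<dots> = 0"
  proof -
    have "(e_p p c) ^ nat p = e_p p (c * int (nat p))" using assms ep_pow[of p c "nat p"] by simp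
    also have "\<dots> = e_p p (0 + p * c)" using assms by (simp add: mult.commute)
    also have "\<dots> = 1" using ep_period[OF assms(1)] ep_0 by metis
    finally show ?thesis using ep_ne1[OF assms] by (simp add: sum_gp_strict)
  qed
  finally show ?thesis .
qed

lemma ep_sum_units: assumes "p > 0" "\<not> p dvd c" shows "(\<Sum>x\<in>{1..<p}. e_p p (c * x)) = -1"
proof -
  have "{0..<p} = insert 0 {1..<p}" using assms by auto
  hence "(\<Sum>x\<in>{0..<p}. e_p p (c * x)) = 1 + (\<Sum>x\<in>{1..<p}. e_p p (c * x))"
    by (simp add: ep_0)
  thus ?thesis using ep_sum_full[OF assms] by (simp add: add_eq_0_iff)
qed



lemma coprime_mod_iff: "p > (0::int) \<Longrightarrow> coprime (y mod p) p \<longleftrightarrow> coprime y p"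
  by (simp add: coprime_iff_gcd_eq_1)

lemma inv_mod: assumes "p > (1::int)" shows "modular_inverse p (y mod p) = modular_inverse p y"
proof (cases "coprime y p")
  case True
  show ?thesis
  proof (rule modular_inverse_int_eqI)
    show "modular_inverse p y \<in> {0..<p}" using assms modular_inverse_int_nonneg modular_inverse_int_less by auto
    have "[(y mod p) * modular_inverse p y = y * modular_inverse p y] (mod p)"
      by (intro cong_mult cong_refl) (simp add: cong_def)
    also have "[y * modular_inverse p y = 1] (mod p)" using True by (rule cong_modular_inverse1)
    finally show "[(y mod p) * modular_inverse p y = 1] (mod p)" .
  qed
next
  case False
  then show ?thesis using coprime_mod_iff[of p y] assms by simp
qed

lemma inv_cong: "p > (1::int) \<Longrightarrow> [y = y'] (mod p) \<Longrightarrow> modular_inverse p y = modular_inverse p y'"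
  by (metis inv_mod cong_def)

lemma K_cong: assumes "p > 1" "[\<beta> = \<beta>'] (mod p)"
  shows "kloosterman p a \<beta> = kloosterman p a \<beta>'"
  unfolding kloosterman_def
  by (intro sum.cong refl ep_cong cong_add cong_mult cong_refl assms) (use assms in auto)

lemma mult_reindex:
  fixes p c :: int
  assumes "prime p" "\<not> p dvd c" "\<And>x y. [x = y] (mod p) \<Longrightarrow> f x = f y"
  shows "(\<Sum>x\<in>{1..<p}. f (c*x)) = (\<Sum>x\<in>{1..<p}. f x)"
proof -
  have cop: "coprime c p" using assms(1,2) prime_imp_coprime coprime_commute by blast
  have "(\<Sum>x\<in>{1..<p}. f (c*x)) = (\<Sum>x\<in>{1..<p}. f (c*x mod p))"
    by (intro sum.cong refl assms(3)) (simp add: cong_def)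
  also have "\<dots> = (\<Sum>x\<in>{1..<p}. f x)"
    using sum.reindex_bij_betw[OF bij_betw_int_remainders_mult[OF cop], of f] by simp
  finally show ?thesis .
qed

lemma sqrt_count:
  fixes p D :: int
  assumes p: "prime p" "p > 2"
  shows "int (card {z\<in>{0..<p}. [z^2 = D] (mod p)}) = 1 + Legendre D p"
proof -
  let ?S = "{z\<in>{0..<p}. [z^2 = D] (mod p)}"
  have sq0: "[z^2 = 0] (mod p) \<Longrightarrow> p dvd z" for z
    using p(1) by (simp add: cong_0_iff prime_dvd_power_iff)
  show ?thesis
  proof (cases "[D = 0] (mod p)")
    case True
    have "?S = {0}"
    proof safe
      fix z assume z: "z \<in> {0..<p}" "[z^2 = D] (mod p)"
      hence "p dvd z" using sq0 True cong_trans by blast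
      thus "z = 0" using z(1) zdvd_not_zless[of z p] by fastforce
    next
      show "0 \<in> {0..<p}" using p by auto
      show "[0^2 = D] (mod p)" using True cong_sym by simp
    qed
    thus ?thesis using True by (simp add: Legendre_def)
  next
    case nz: False
    show ?thesis
    proof (cases "QuadRes p D")
      case False
      hence "?S = {}" unfolding QuadRes_def by blast
      hence "card ?S = 0" by (simp only: card.empty)
      thus ?thesis using nz False by (simp add: Legendre_def)
    next
      case True
      then obtain y where y: "[y^2 = D] (mod p)" unfolding QuadRes_def by blast
      define y0 where "y0 = y mod p"
      have y0: "[y0^2 = D] (mod p)" unfolding y0_def
        using y by (metis cong_def power_mod)
      have y0r: "y0 \<in> {0..<p}" using p unfolding y0_def by auto
      have "y0 \<noteq> 0" using y0 nz by (metis cong_sym zero_power2)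
      hence y0p: "0 < y0" using y0r by auto
      have sub1: "?S \<subseteq> {y0, p - y0}"
      proof
        fix z assume "z \<in> ?S"
        hence z: "z \<in> {0..<p}" "[z^2 = D] (mod p)" by auto
        show "z \<in> {y0, p - y0}"
        proof (cases "z = p - y0")
        case False
        have "[z^2 = y0^2] (mod p)" using z(2) y0 cong_sym cong_trans by blast
        hence "p dvd (z^2 - y0^2)" by (simp add: cong_iff_dvd_diff)
        moreover have "z^2 - y0^2 = (z - y0) * (z + y0)" by (simp add: power2_eq_square algebra_simps)
        ultimately have "p dvd (z - y0) \<or> p dvd (z + y0)" using p(1) prime_dvd_mult_iff by metis
        hence "z = y0"
        proof
          assume "p dvd (z - y0)"
          thus ?thesis using dvd_imp_le_int[of "z - y0" p] z(1) y0r by force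
        next
          assume "p dvd (z + y0)"
          hence "p dvd (z + y0 - p)" by (simp add: dvd_diff)
          hence "z + y0 - p = 0" using dvd_imp_le_int[of "z + y0 - p" p] z(1) y0r y0p by force
          thus ?thesis using False by simp
        qed
        thus ?thesis by simp
        qed simp
      qed
      moreover have "{y0, p - y0} \<subseteq> ?S"
      proof -
        have "y0 \<in> {0..<p}" "[y0^2 = D] (mod p)" using y0r y0 by auto
        have "p - y0 \<in> {0..<p}" using y0r y0p by auto
        have "(p-y0)^2 - y0^2 = p*(p-2*y0)" by (simp add: power2_eq_square algebra_simps)
        hence "[(p - y0)^2 = y0^2] (mod p)" by (simp add: cong_iff_dvd_diff)
        hence "[(p - y0)^2 = D] (mod p)" using y0 cong_trans by blast
        thus ?thesis using \<open>y0 \<in> {0..<p}\<close> \<open>[y0^2 = D] (mod p)\<close> \<open>p - y0 \<in> {0..<p}\<close> by auto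
      qed
      ultimately have "?S = {y0, p - y0}" by blast
      moreover have "y0 \<noteq> p - y0"
      proof
        assume "y0 = p - y0"
        hence "p = 2 * y0" by simp
        moreover have "odd p" using p prime_odd_int by blast
        ultimately show False by simp
      qed
      ultimately show ?thesis using nz True by (simp add: Legendre_def)
    qed
  qed
qed



lemma quad_count:
  fixes p B C :: int
  assumes p: "prime p" "p > 2"
  shows "int (card {t\<in>{0..<p}. [t^2 + B*t + C = 0] (mod p)}) = 1 + Legendre (B^2 - 4*C) p"
proof -
  define D where "D = B^2 - 4*C"
  let ?S1 = "{t\<in>{0..<p}. [t^2 + B*t + C = 0] (mod p)}"
  let ?S2 = "{z\<in>{0..<p}. [z^2 = D] (mod p)}"
  define h where "h = (p + 1) div 2"
  have "odd p" using p prime_odd_int by blast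
  hence h2: "2 * h = p + 1" unfolding h_def by (metis add.commute dvd_mult_div_cancel odd_even_add odd_one)
  have p2: "\<not> p dvd 2" using p zdvd_not_zless[of 2 p] by auto
  have key: "[t^2 + B*t + C = 0] (mod p) \<longleftrightarrow> [(2*t+B)^2 = D] (mod p)" for t
  proof -
    have e: "(2*t+B)^2 - D = 2 * (2 * (t^2 + B*t + C))" unfolding D_def by (simp add: power2_eq_square algebra_simps)
    have "[(2*t+B)^2 = D] (mod p) \<longleftrightarrow> p dvd (2 * (2 * (t^2 + B*t + C)))"
      by (simp add: cong_iff_dvd_diff e)
    also have "\<dots> \<longleftrightarrow> p dvd (t^2 + B*t + C)" using p(1) p2 prime_dvd_mult_iff by metis
    also have "\<dots> \<longleftrightarrow> [t^2 + B*t + C = 0] (mod p)" by (simp add: cong_0_iff)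
    finally show ?thesis by simp
  qed
  define f where "f t = (2*t+B) mod p" for t
  define g where "g z = ((z - B) * h) mod p" for z
  have fg: "[2 * g z + B = z] (mod p)" for z
  proof -
    have "[2 * g z + B = 2 * ((z - B) * h) + B] (mod p)"
      unfolding g_def by (intro cong_add cong_mult cong_refl) (simp add: cong_def)
    also have "2 * ((z - B) * h) + B = (z - B) * (2 * h) + B" by (simp add: algebra_simps)
    also have "\<dots> = z + p * (z - B)" unfolding h2 by (simp add: algebra_simps)
    also have "[z + p * (z - B) = z] (mod p)" by (simp add: cong_def)
    finally show ?thesis .
  qed
  have gf: "[(f t - B) * h = t] (mod p)" for t
  proof -
    have "[(f t - B) * h = (2*t + B - B) * h] (mod p)"
      unfolding f_def by (intro cong_mult cong_diff cong_refl) (simp add: cong_def)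
    also have "(2*t + B - B) * h = t * (2 * h)" by (simp add: algebra_simps)
    also have "\<dots> = t + p * t" unfolding h2 by (simp add: algebra_simps)
    also have "[t + p * t = t] (mod p)" by (simp add: cong_def)
    finally show ?thesis .
  qed
  have "bij_betw f ?S1 ?S2"
  proof (rule bij_betwI[where g = g])
    show "f \<in> ?S1 \<rightarrow> ?S2"
    proof
      fix t assume "t \<in> ?S1"
      hence "[(2*t+B)^2 = D] (mod p)" using key by auto
      hence "[(f t)^2 = D] (mod p)" unfolding f_def by (metis cong_def power_mod)
      moreover have "f t \<in> {0..<p}" unfolding f_def using p by auto
      ultimately show "f t \<in> ?S2" by auto
    qed
    show "g \<in> ?S2 \<rightarrow> ?S1"
    proof
      fix z assume z: "z \<in> ?S2"
      have "[(2 * g z + B)^2 = z^2] (mod p)" using fg by (rule cong_pow)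
      hence "[(2 * g z + B)^2 = D] (mod p)" using z cong_trans by auto
      hence "[(g z)^2 + B * g z + C = 0] (mod p)" using key by blast
      moreover have "g z \<in> {0..<p}" unfolding g_def using p by auto
      ultimately show "g z \<in> ?S1" by auto
    qed
    show "g (f t) = t" if "t \<in> ?S1" for t
    proof -
      have "g (f t) = ((f t - B) * h) mod p" unfolding g_def by simp
      also have "\<dots> = t mod p" using gf cong_def by blast
      also have "\<dots> = t" using that by auto
      finally show ?thesis .
    qed
    show "f (g z) = z" if "z \<in> ?S2" for z
    proof -
      have "f (g z) = z mod p" unfolding f_def using fg cong_def by blast
      also have "\<dots> = z" using that by auto
      finally show ?thesis .
    qed
  qed
  hence c: "card ?S1 = card ?S2" by (rule bij_betw_same_card)
  have F: "int (card ?S2) = 1 + Legendre D p" by (rule sqrt_count[OF p])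
  have "int (card ?S1) = 1 + Legendre D p" using c F by simp
  thus ?thesis unfolding D_def .
qed



lemma unit_ndvd: "x \<in> {1..<p} \<Longrightarrow> \<not> p dvd (x::int)"
  using zdvd_not_zless[of x p] by auto

lemma unit_coprime: "prime (p::int) \<Longrightarrow> \<not> p dvd x \<Longrightarrow> coprime x p"
  using prime_imp_coprime coprime_commute by blast

lemma inv_unit: assumes "prime (p::int)" "\<not> p dvd x" shows "modular_inverse p x \<in> {1..<p}"
proof -
  have "p > 1" using assms(1) prime_gt_1_int by blast
  thus ?thesis using mult_modular_inverse_int_pos[OF _ unit_coprime[OF assms]] modular_inverse_int_less[of p x]
    by auto
qed

lemma inv_cong1: assumes "prime (p::int)" "\<not> p dvd x" shows "[x * modular_inverse p x = 1] (mod p)"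
  using cong_modular_inverse1 unit_coprime[OF assms] by blast

lemma step2:
  fixes p a b x :: int
  assumes p: "prime p" "p > 2" and x: "x \<in> {1..<p}"
  shows "(\<Sum>y\<in>{1..<p}. e_p p (a*(x+y) + b*(modular_inverse p x + modular_inverse p y)))
       = (\<Sum>t\<in>{1..<p}. e_p p (a*x*(1+t) + b*modular_inverse p x*(1 + modular_inverse p t)))"
proof -
  have p1: "p > 1" using p by auto
  define f where "f y = e_p p (a*(x+y) + b*(modular_inverse p x + modular_inverse p y))" for y
  have per: "f y = f y'" if "[y = y'] (mod p)" for y y'
    unfolding f_def using p1 that inv_cong[OF p1 that]
    by (intro ep_cong cong_add cong_mult cong_refl) auto
  have "(\<Sum>t\<in>{1..<p}. f (x*t)) = (\<Sum>y\<in>{1..<p}. f y)"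
    by (rule mult_reindex[OF p(1) unit_ndvd[OF x]]) (rule per)
  moreover have "f (x*t) = e_p p (a*x*(1+t) + b*modular_inverse p x*(1 + modular_inverse p t))"
    if t: "t \<in> {1..<p}" for t
  proof -
    have cx: "coprime x p" "coprime t p" using unit_coprime[OF p(1)] unit_ndvd x t by auto
    have im: "modular_inverse p (x*t) = (modular_inverse p t * modular_inverse p x) mod p"
      using modular_inverse_int_mult[OF cx] p1 by simp
    have "[a*(x+x*t) + b*(modular_inverse p x + modular_inverse p (x*t))
         = a*(x+x*t) + b*(modular_inverse p x + modular_inverse p t * modular_inverse p x)] (mod p)"
      unfolding im by (intro cong_add cong_mult cong_refl) (simp add: cong_def)
    also have "a*(x+x*t) + b*(modular_inverse p x + modular_inverse p t * modular_inverse p x)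
       = a*x*(1+t) + b*modular_inverse p x*(1 + modular_inverse p t)" by (simp add: algebra_simps)
    finally show ?thesis unfolding f_def using p1 by (intro ep_cong) auto
  qed
  ultimately show ?thesis unfolding f_def by simp
qed

lemma K_units: "kloosterman p a bb = (\<Sum>s\<in>{1..<p}. e_p p (a * s + bb * modular_inverse p s))"
proof -
  have "{1..p-1} = {1..<p}" by auto
  thus ?thesis unfolding kloosterman_def by simp
qed

lemma step3:
  fixes p a b t :: int
  assumes p: "prime p" "p > 2" and t: "t \<in> {1..<p-1}"
  shows "(\<Sum>x\<in>{1..<p}. e_p p (a*x*(1+t) + b*modular_inverse p x*(1 + modular_inverse p t)))
       = kloosterman p a ((1+t)^2 * modular_inverse p t * b)"
proof -
  have p1: "p > 1" using p by auto
  define k where "k = modular_inverse p t"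
  define c where "c = 1 + t"
  have tu: "t \<in> {1..<p}" using t by auto
  have cu: "c \<in> {1..<p}" using t unfolding c_def by auto
  define F where "F s = e_p p (a * s + ((1+t)^2*k*b) * modular_inverse p s)" for s
  have per: "F y = F y'" if "[y = y'] (mod p)" for y y'
    unfolding F_def using p1 that inv_cong[OF p1 that]
    by (intro ep_cong cong_add cong_mult cong_refl) auto
  have "(\<Sum>x\<in>{1..<p}. F (c*x)) = (\<Sum>s\<in>{1..<p}. F s)"
    by (rule mult_reindex[OF p(1) unit_ndvd[OF cu]]) (rule per)
  moreover have "F (c*x) = e_p p (a*x*(1+t) + b*modular_inverse p x*(1 + k))"
    if x: "x \<in> {1..<p}" for x
  proof -
    define i where "i = modular_inverse p x"
    define j where "j = modular_inverse p c"
    define I where "I = modular_inverse p (c*x)"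
    have cx: "coprime c p" "coprime x p" using unit_coprime[OF p(1)] unit_ndvd x cu by auto
    have "I = (i * j) mod p"
      unfolding I_def i_def j_def using modular_inverse_int_mult[OF cx] p1 by simp
    hence "[I = i * j] (mod p)" by (simp add: cong_def)
    then obtain q where q: "i * j = I + p * q" using cong_iff_lin by blast
    have "[c * j = 1] (mod p)" unfolding j_def by (rule inv_cong1[OF p(1) unit_ndvd[OF cu]])
    then obtain r where r: "1 = c * j + p * r" using cong_iff_lin by blast
    have "[t * k = 1] (mod p)" unfolding k_def by (rule inv_cong1[OF p(1) unit_ndvd[OF tu]])
    then obtain s where s: "1 = t * k + p * s" using cong_iff_lin by blast
    have "a*x*(1+t) + b*i*(1+k) = (a*(c*x) + ((1+t)^2*k*b)*I) + p * (b*i * s + c*k*b*i*r + c^2*k*b*q)"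
    proof -
      have h: "a*x*(1+t) + b*i*(1+k) - ((a*(c*x) + ((1+t)^2*k*b)*I) + p * (b*i * s + c*k*b*i*r + c^2*k*b*q))
        = (c^2*k*b)*(i*j - I - p*q) + (c*k*b*i)*(1 - c*j - p*r) + (b*i)*(1 - t*k - p * s)"
        unfolding c_def by (simp add: algebra_simps power2_eq_square)
      have "i*j - I - p*q = 0" "1 - c*j - p*r = 0" "1 - t*k - p * s = 0" using q r s by auto
      with h show ?thesis by simp
    qed
    hence "[a*(c*x) + ((1+t)^2*k*b)*I = a*x*(1+t) + b*i*(1+k)] (mod p)"
      using cong_iff_lin by blast
    thus ?thesis unfolding F_def I_def i_def using p1 by (intro ep_cong) auto
  qed
  ultimately show ?thesis unfolding K_units F_def k_def by (simp add: mult.assoc)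
qed

lemma inv_last: assumes "prime (p::int)" shows "modular_inverse p (p-1) = p-1"
proof (rule modular_inverse_int_eqI)
  show "p - 1 \<in> {0..<p}" using prime_gt_1_int[OF assms] by auto
  have "(p-1)*(p-1) = 1 + p*(p-2)" by (simp add: algebra_simps)
  thus "[(p-1)*(p-1) = 1] (mod p)" by (simp add: cong_def)
qed

lemma fiber:
  fixes p m :: int
  assumes p: "prime p" "p > 2" and m: "m \<in> {1..<p}"
  shows "{t\<in>{1..<p-1}. ((1+t)^2 * modular_inverse p t) mod p = m}
       = {t\<in>{0..<p}. [t^2 + (2-m)*t + 1 = 0] (mod p)}"
proof -
  have Q: "t^2 + (2-m)*t + 1 = (1+t)^2 - m*t" for t by (simp add: power2_eq_square algebra_simps)
  show ?thesis
  proof (intro equalityI subsetI)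
    fix t assume "t \<in> {t\<in>{1..<p-1}. ((1+t)^2 * modular_inverse p t) mod p = m}"
    hence t: "t \<in> {1..<p-1}" "((1+t)^2 * modular_inverse p t) mod p = m" by auto
    have tu: "t \<in> {1..<p}" using t by auto
    have "[(1+t)^2 * modular_inverse p t = m] (mod p)" using t(2) m by (simp add: cong_def)
    have "[(1+t)^2 = (1+t)^2 * (t * modular_inverse p t)] (mod p)"
      using inv_cong1[OF p(1) unit_ndvd[OF tu]] by (metis cong_scalar_left cong_sym mult.right_neutral)
    also have "(1+t)^2 * (t * modular_inverse p t) = ((1+t)^2 * modular_inverse p t) * t" by simp
    also have "[\<dots> = m * t] (mod p)"
      using \<open>[(1+t)^2 * modular_inverse p t = m] (mod p)\<close> by (rule cong_mult) simp
    finally have "p dvd ((1+t)^2 - m*t)" by (simp add: cong_iff_dvd_diff)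
    hence "[t^2 + (2-m)*t + 1 = 0] (mod p)" unfolding Q by (simp add: cong_0_iff)
    thus "t \<in> {t\<in>{0..<p}. [t^2 + (2-m)*t + 1 = 0] (mod p)}" using t by auto
  next
    fix t assume "t \<in> {t\<in>{0..<p}. [t^2 + (2-m)*t + 1 = 0] (mod p)}"
    hence t: "t \<in> {0..<p}" and dv: "p dvd ((1+t)^2 - m*t)" unfolding Q by (auto simp: cong_0_iff)
    have "t \<noteq> 0"
    proof
      assume "t = 0" with dv have "p dvd 1" by simp
      thus False using p by auto
    qed
    moreover have "t \<noteq> p - 1"
    proof
      assume "t = p - 1"
      with dv have "p dvd (p*p - m*(p - 1))" by (simp add: power2_eq_square)
      moreover have "p*p - m*(p-1) = p*(p - m) + m" by (simp add: algebra_simps)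
      ultimately have "p dvd m" by (metis dvd_add_right_iff dvd_triv_left)
      thus False using unit_ndvd[OF m] by simp
    qed
    ultimately have t1: "t \<in> {1..<p-1}" using t by auto
    hence tu: "t \<in> {1..<p}" by auto
    have c1: "[(1+t)^2 = m*t] (mod p)" using dv by (simp add: cong_iff_dvd_diff)
    have "[(1+t)^2 * modular_inverse p t = (m*t) * modular_inverse p t] (mod p)"
      using c1 by (rule cong_mult) simp
    also have "(m*t) * modular_inverse p t = m * (t * modular_inverse p t)" by simp
    also have "[\<dots> = m * 1] (mod p)"
      using inv_cong1[OF p(1) unit_ndvd[OF tu]] by (rule cong_mult[OF cong_refl])
    finally have "((1+t)^2 * modular_inverse p t) mod p = m" using m by (simp add: cong_def)
    thus "t \<in> {t\<in>{1..<p-1}. ((1+t)^2 * modular_inverse p t) mod p = m}" using t1 by auto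
  qed
qed

lemma step5:
  fixes p a b :: int
  assumes p: "prime p" "p > 2" and ab: "\<not> p dvd a" "\<not> p dvd b"
  shows "(\<Sum>m\<in>{1..<p}. kloosterman p a (m*b)) = 1"
proof -
  have p0: "p > 0" using p by auto
  have "(\<Sum>m\<in>{1..<p}. kloosterman p a (m*b))
      = (\<Sum>m\<in>{1..<p}. \<Sum>s\<in>{1..<p}. e_p p (a * s) * e_p p ((b * modular_inverse p s) * m))"
    unfolding K_units using p0 by (intro sum.cong refl) (simp add: ep_add[symmetric] algebra_simps)
  also have "\<dots> = (\<Sum>s\<in>{1..<p}. e_p p (a * s) * (\<Sum>m\<in>{1..<p}. e_p p ((b * modular_inverse p s) * m)))"
    by (subst sum.swap) (simp add: sum_distrib_left)
  also have "\<dots> = (\<Sum>s\<in>{1..<p}. e_p p (a * s) * (-1))"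
  proof (intro sum.cong refl)
    fix s assume s: "s \<in> {1..<p}"
    have "modular_inverse p s \<in> {1..<p}" by (rule inv_unit[OF p(1) unit_ndvd[OF s]])
    hence "\<not> p dvd (b * modular_inverse p s)" using ab p(1) unit_ndvd prime_dvd_mult_iff by metis
    thus "e_p p (a * s) * (\<Sum>m\<in>{1..<p}. e_p p ((b * modular_inverse p s) * m)) = e_p p (a * s) * (-1)"
      using ep_sum_units[OF p0] by simp
  qed
  also have "\<dots> = - (\<Sum>s\<in>{1..<p}. e_p p (a * s))" by (simp add: sum_negf)
  also have "\<dots> = 1" using ep_sum_units[OF p0 ab(1)] by simp
  finally show ?thesis .
qed



theorem mainTheorem1:
  fixes p a b :: int
  assumes "prime p" and "p > 2" and "\<not> p dvd a * b"
  shows "(kloosterman p a b)\<^sup>2 =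
    of_int p + (\<Sum>l = 1..p. of_int (Legendre (l\<^sup>2 - 4 * l) p) * kloosterman p a (l * b))"
proof -
  note p = assms(1,2)
  have p0: "p > 0" and p1: "p > 1" using p by auto
  have na: "\<not> p dvd a" and nb: "\<not> p dvd b" using assms(3) by auto
  define U where "U = {1..<p}"
  define V where "V = {1..<p-1}"
  define iv where "iv = modular_inverse p"
  define Ee where "Ee = e_p p"
  define Lg where "Lg m = of_int (Legendre (m\<^sup>2 - 4 * m) p) * kloosterman p a (m * b)" for m
  have fU: "finite U" and fV: "finite V" unfolding U_def V_def by auto
  have S1: "(kloosterman p a b)\<^sup>2 = (\<Sum>x\<in>U. \<Sum>y\<in>U. Ee (a*(x+y) + b*(iv x + iv y)))"
  proof -
    have "(kloosterman p a b)\<^sup>2 = (\<Sum>x\<in>U. Ee (a*x + b*iv x)) * (\<Sum>y\<in>U. Ee (a*y + b*iv y))"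
      unfolding K_units power2_eq_square U_def Ee_def iv_def by simp
    also have "\<dots> = (\<Sum>x\<in>U. \<Sum>y\<in>U. Ee (a*x + b*iv x) * Ee (a*y + b*iv y))"
      by (rule sum_product)
    also have "\<dots> = (\<Sum>x\<in>U. \<Sum>y\<in>U. Ee (a*(x+y) + b*(iv x + iv y)))"
      unfolding Ee_def using p0 by (intro sum.cong refl) (simp add: ep_add[symmetric] algebra_simps)
    finally show ?thesis .
  qed
  have S2: "(\<Sum>x\<in>U. \<Sum>y\<in>U. Ee (a*(x+y) + b*(iv x + iv y)))
        = (\<Sum>t\<in>U. \<Sum>x\<in>U. Ee (a*x*(1+t) + b*iv x*(1 + iv t)))"
  proof -
    have "(\<Sum>x\<in>U. \<Sum>y\<in>U. Ee (a*(x+y) + b*(iv x + iv y)))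
        = (\<Sum>x\<in>U. \<Sum>t\<in>U. Ee (a*x*(1+t) + b*iv x*(1 + iv t)))"
      unfolding U_def Ee_def iv_def by (intro sum.cong refl step2[OF p]) simp
    also have "\<dots> = (\<Sum>t\<in>U. \<Sum>x\<in>U. Ee (a*x*(1+t) + b*iv x*(1 + iv t)))"
      by (rule sum.swap)
    finally show ?thesis .
  qed
  have UV: "U = insert (p-1) V" "p - 1 \<notin> V" unfolding U_def V_def using p by auto
  have last: "(\<Sum>x\<in>U. Ee (a*x*(1+(p-1)) + b*iv x*(1 + iv (p-1)))) = of_int (p - 1)"
  proof -
    have "(\<Sum>x\<in>U. Ee (a*x*(1+(p-1)) + b*iv x*(1 + iv (p-1)))) = (\<Sum>x\<in>U. 1)"
    proof (intro sum.cong refl)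
      fix x
      have "a*x*(1+(p-1)) + b*iv x*(1 + iv (p-1)) = 0 + p * (a*x + b*iv x)"
        unfolding iv_def inv_last[OF p(1)] by (simp add: algebra_simps)
      thus "Ee (a*x*(1+(p-1)) + b*iv x*(1 + iv (p-1))) = 1"
        unfolding Ee_def using ep_period[OF p0, of 0 "a*x + b*iv x"] ep_0 by simp
    qed
    also have "\<dots> = of_nat (card U)" by simp
    also have "card U = nat (p - 1)" unfolding U_def by simp
    also have "(of_nat (nat (p - 1)) :: complex) = of_int (p - 1)" using p1 by (simp add: of_nat_nat)
    finally show ?thesis .
  qed
  define h where "h t = ((1+t)^2 * iv t) mod p" for t
  have rest: "(\<Sum>t\<in>V. \<Sum>x\<in>U. Ee (a*x*(1+t) + b*iv x*(1 + iv t)))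
      = (\<Sum>t\<in>V. kloosterman p a (h t * b))"
  proof (intro sum.cong refl)
    fix t assume t: "t \<in> V"
    have "(\<Sum>x\<in>U. Ee (a*x*(1+t) + b*iv x*(1 + iv t))) = kloosterman p a ((1+t)^2 * iv t * b)"
      unfolding U_def Ee_def iv_def using t unfolding V_def by (rule step3[OF p])
    also have "\<dots> = kloosterman p a (h t * b)"
      unfolding h_def by (rule K_cong[OF p1]) (intro cong_mult cong_refl, simp add: cong_def)
    finally show "(\<Sum>x\<in>U. Ee (a*x*(1+t) + b*iv x*(1 + iv t))) = kloosterman p a (h t * b)" .
  qed
  have hV: "h ` V \<subseteq> U"
  proof
    fix m assume "m \<in> h ` V"
    then obtain t where t: "t \<in> V" and m: "m = h t" by blast
    have tu: "t \<in> {1..<p}" "1 + t \<in> {1..<p}" using t unfolding V_def by auto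
    have "\<not> p dvd iv t" unfolding iv_def by (rule unit_ndvd[OF inv_unit[OF p(1) unit_ndvd[OF tu(1)]]])
    moreover have "\<not> p dvd (1+t)" by (rule unit_ndvd[OF tu(2)])
    ultimately have "\<not> p dvd ((1+t)^2 * iv t)"
      using p(1) by (simp add: prime_dvd_mult_iff prime_dvd_power_iff)
    hence "m \<noteq> 0" unfolding m h_def by (simp add: dvd_eq_mod_eq_0)
    moreover have "m \<in> {0..<p}" unfolding m h_def using p0 by simp
    ultimately show "m \<in> U" unfolding U_def by auto
  qed
  have grp: "(\<Sum>t\<in>V. kloosterman p a (h t * b))
        = (\<Sum>m\<in>U. (1 + of_int (Legendre (m\<^sup>2 - 4 * m) p)) * kloosterman p a (m * b))"
  proof -
    have "(\<Sum>t\<in>V. kloosterman p a (h t * b))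
        = (\<Sum>m\<in>U. \<Sum>t\<in>{t. t \<in> V \<and> h t = m}. kloosterman p a (h t * b))"
      by (rule sum.group[OF fV fU hV, symmetric])
    also have "\<dots> = (\<Sum>m\<in>U. (1 + of_int (Legendre (m\<^sup>2 - 4 * m) p)) * kloosterman p a (m * b))"
    proof (intro sum.cong refl)
      fix m assume m: "m \<in> U"
      define Sm where "Sm = {t. t \<in> V \<and> h t = m}"
      have e1: "Sm = {t\<in>{0..<p}. [t^2 + (2-m)*t + 1 = 0] (mod p)}"
        using fiber[OF p, of m] m unfolding Sm_def U_def V_def h_def iv_def by simp
      have q: "int (card {t\<in>{0..<p}. [t^2 + (2-m)*t + 1 = 0] (mod p)})
          = 1 + Legendre ((2-m)^2 - 4*1) p"
        by (rule quad_count[OF p])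
      have "(2-m)^2 - 4*1 = m\<^sup>2 - 4 * m" by (simp add: power2_eq_square algebra_simps)
      with q e1 have c: "int (card Sm) = 1 + Legendre (m\<^sup>2 - 4 * m) p" by simp
      have "(\<Sum>t\<in>Sm. kloosterman p a (h t * b)) = (\<Sum>t\<in>Sm. kloosterman p a (m * b))"
        unfolding Sm_def by (intro sum.cong refl) simp
      also have "\<dots> = of_nat (card Sm) * kloosterman p a (m * b)" by simp
      also have "(of_nat (card Sm) :: complex) = of_int (int (card Sm))" by simp
      also have "\<dots> = 1 + of_int (Legendre (m\<^sup>2 - 4 * m) p)" unfolding c by simp
      finally show "(\<Sum>t\<in>{t. t \<in> V \<and> h t = m}. kloosterman p a (h t * b))
          = (1 + of_int (Legendre (m\<^sup>2 - 4 * m) p)) * kloosterman p a (m * b)"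
        unfolding Sm_def .
    qed
    finally show ?thesis .
  qed
  have s5: "(\<Sum>m\<in>U. kloosterman p a (m * b)) = 1" unfolding U_def by (rule step5[OF p na nb])
  have rhs: "(\<Sum>l = 1..p. Lg l) = (\<Sum>l\<in>U. Lg l)"
  proof -
    have "{1..p} = insert p U" "p \<notin> U" unfolding U_def using p by auto
    moreover have "Legendre (p\<^sup>2 - 4 * p) p = 0"
    proof -
      have "p\<^sup>2 - 4 * p = 0 + p * (p - 4)" by (simp add: power2_eq_square algebra_simps)
      hence "[p\<^sup>2 - 4 * p = 0] (mod p)" by (simp add: cong_def)
      thus ?thesis by (simp add: Legendre_def)
    qed
    ultimately show ?thesis using fU unfolding Lg_def by simp
  qed
  define F where "F t = (\<Sum>x\<in>U. Ee (a*x*(1+t) + b*iv x*(1 + iv t)))" for t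
  have "(\<Sum>t\<in>U. F t) = F (p-1) + (\<Sum>t\<in>V. F t)"
    unfolding UV(1) using UV(2) fV by simp
  hence "(kloosterman p a b)\<^sup>2 = F (p-1) + (\<Sum>t\<in>V. F t)"
    using S1 S2 unfolding F_def by simp
  also have "F (p-1) = of_int (p - 1)" unfolding F_def by (rule last)
  also have "(\<Sum>t\<in>V. F t) = (\<Sum>t\<in>V. kloosterman p a (h t * b))" unfolding F_def by (rule rest)
  finally have "(kloosterman p a b)\<^sup>2 = of_int (p - 1) + (\<Sum>t\<in>V. kloosterman p a (h t * b))" .
  also have "\<dots> = of_int (p - 1) + (\<Sum>m\<in>U. kloosterman p a (m * b)) + (\<Sum>m\<in>U. Lg m)"
    unfolding grp Lg_def by (simp add: distrib_right sum.distrib)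
  also have "\<dots> = of_int p + (\<Sum>m\<in>U. Lg m)" unfolding s5 by simp
  also have "\<dots> = of_int p + (\<Sum>l = 1..p. Lg l)" unfolding rhs ..
  finally show ?thesis unfolding Lg_def .
qed


end
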